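(* The Minimax SCC $M$ coincides with the Borda SCC $Bor$ (as functions on $\mathcal P$) if and only if $n=2$.
   Context: Let $n,h\ge2$, $N=\{1,\dots,n\}$, $H=\{1,\dots,h\}$; $\mathcal P$ is the set of $h$-tuples $p$ of linear orders on $N$; $x>_{p_i}y$ means $x\neq y$ and $p_i$ ranks $x$ above $y$; $\mathrm{rank}_{p_i}(x)=|\{y: y>_{p_i}x\}|+1$. $M(p)=\mathrm{argmin}_{x\in N}\max_{y\neq x}|\{i: y>_{p_i}x\}|$ and $Bor(p)=\mathrm{argmax}_{x\in N}\sum_{i=1}^h(n-\mathrm{rank}_{p_i}(x))$. *)

theory Defs
  imports Main
begin

text \<open>A preference p_i is a linear order on N,
 represented as a relation r with (x,y) in r meaning "x is ranked weakly above y".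
 A profile is a function p from voters to such relations; only its values on H matter.\<close>

definition is_profile :: "nat \<Rightarrow> nat \<Rightarrow> (nat \<Rightarrow> nat rel) \<Rightarrow> bool" where
  "is_profile n h p \<longleftrightarrow> (\<forall>i\<in>{1..h}. linear_order_on {1..n} (p i))"

definition pref :: "nat rel \<Rightarrow> nat \<Rightarrow> nat \<Rightarrow> bool" where
  "pref r x y \<longleftrightarrow> x \<noteq> y \<and> (x, y) \<in> r"

definition rank :: "nat \<Rightarrow> nat rel \<Rightarrow> nat \<Rightarrow> nat" where
  "rank n r x = card {y \<in> {1..n}. pref r y x} + 1"

definition minimax_score :: "nat \<Rightarrow> nat \<Rightarrow> (nat \<Rightarrow> nat rel) \<Rightarrow> nat \<Rightarrow> nat" where
  "minimax_score n h p x = Max {card {i \<in> {1..h}. pref (p i) y x} | y. y \<in> {1..n} \<and> y \<noteq> x}"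

definition Minimax :: "nat \<Rightarrow> nat \<Rightarrow> (nat \<Rightarrow> nat rel) \<Rightarrow> nat set" where
  "Minimax n h p = {x \<in> {1..n}. \<forall>z \<in> {1..n}. minimax_score n h p x \<le> minimax_score n h p z}"

definition borda_score :: "nat \<Rightarrow> nat \<Rightarrow> (nat \<Rightarrow> nat rel) \<Rightarrow> nat \<Rightarrow> nat" where
  "borda_score n h p x = (\<Sum>i = 1..h. n - rank n (p i) x)"

definition Borda :: "nat \<Rightarrow> nat \<Rightarrow> (nat \<Rightarrow> nat rel) \<Rightarrow> nat set" where
  "Borda n h p = {x \<in> {1..n}. \<forall>z \<in> {1..n}. borda_score n h p z \<le> borda_score n h p x}"

end

theory Submission
  imports Defs
begin


lemma lin_pref:
  assumes "linear_order_on {1..n} r" "x \<in> {1..n}" "y \<in> {1..n}" "x \<noteq> y"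
  shows "pref r x y \<longleftrightarrow> \<not> pref r y x"
  using assms unfolding linear_order_on_def partial_order_on_def total_on_def antisym_def pref_def
  by blast

lemma two_case:
  assumes "is_profile 2 h p"
  shows "Minimax 2 h p = Borda 2 h p"
proof -
  define c where "c x y = card {i\<in>{1..h}. pref (p i) y x}" for x y
  have e: "{1..2::nat} = {1,2}" by auto
  have lin: "\<And>i. i \<in> {1..h} \<Longrightarrow> linear_order_on {1..2} (p i)"
    using assms unfolding is_profile_def by auto
  have ms: "minimax_score 2 h p x = c x (3 - x)" if "x \<in> {1,2}" for x
  proof -
    have "{card {i \<in> {1..h}. pref (p i) y x} | y. y \<in> {1..2} \<and> y \<noteq> x} = {c x (3-x)}"
      using that unfolding e by (auto simp: c_def)
    then show ?thesis unfolding minimax_score_def by simp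
  qed
  have bs: "borda_score 2 h p x = c (3 - x) x" if "x \<in> {1,2}" for x
  proof -
    have "borda_score 2 h p x = (\<Sum>i = 1..h. if pref (p i) x (3-x) then 1 else 0)"
      unfolding borda_score_def
    proof (rule sum.cong[OF refl])
      fix i assume i: "i \<in> {1..h}"
      have "{y \<in> {1..2}. pref (p i) y x} = (if pref (p i) (3-x) x then {3-x} else {})"
        using that unfolding e by (auto simp: pref_def)
      moreover have "pref (p i) x (3-x) \<longleftrightarrow> \<not> pref (p i) (3-x) x"
        by (rule lin_pref[OF lin[OF i]]) (use that in auto)
      ultimately show "2 - rank 2 (p i) x = (if pref (p i) x (3-x) then 1 else 0)"
        unfolding rank_def by auto
    qed
    also have "\<dots> = c (3-x) x"
    proof -
      have "{1..h} \<inter> {i. pref (p i) x (3-x)} = {i\<in>{1..h}. pref (p i) x (3-x)}" by auto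
      then show ?thesis unfolding c_def by (simp add: sum.If_cases)
    qed
    finally show ?thesis .
  qed
  have tot: "c x (3-x) + c (3-x) x = h" if "x \<in> {1,2}" for x
  proof -
    have pp: "pref (p i) x (3-x) \<longleftrightarrow> \<not> pref (p i) (3-x) x" if "i \<in> {1..h}" for i
      by (rule lin_pref[OF lin[OF that]]) (use \<open>x \<in> {1,2}\<close> in auto)
    let ?A = "{i\<in>{1..h}. pref (p i) (3-x) x}" and ?B = "{i\<in>{1..h}. pref (p i) x (3-x)}"
    have u: "?A \<union> ?B = {1..h}" using pp by auto
    have d: "?A \<inter> ?B = {}" using pp by auto
    have "card (?A \<union> ?B) = card ?A + card ?B" by (rule card_Un_disjoint) (use d in auto)
    then have "card ?A + card ?B = h" using u by simp
    then show ?thesis unfolding c_def by simp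
  qed
  show ?thesis unfolding Minimax_def Borda_def e
  proof -
    have "ms1": "minimax_score 2 h p (Suc 0) = c (Suc 0) 2" using ms[of 1] by simp
    have "ms2": "minimax_score 2 h p 2 = c 2 (Suc 0)" using ms[of 2] by simp
    have "bs1": "borda_score 2 h p (Suc 0) = c 2 (Suc 0)" using bs[of 1] by simp
    have "bs2": "borda_score 2 h p 2 = c (Suc 0) 2" using bs[of 2] by simp
    show "{x \<in> {1, 2}. \<forall>z\<in>{1, 2}. minimax_score 2 h p x \<le> minimax_score 2 h p z} =
    {x \<in> {1, 2}. \<forall>z\<in>{1, 2}. borda_score 2 h p z \<le> borda_score 2 h p x}"
      by (auto simp: ms1 ms2 bs1 bs2)
  qed
qed


definition ordf :: "nat \<Rightarrow> (nat \<Rightarrow> nat) \<Rightarrow> nat rel" where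
  "ordf n f = {(x,y). x \<in> {1..n} \<and> y \<in> {1..n} \<and> f x \<le> f y}"

lemma A: "refl_on {1..n} (ordf n f)" unfolding refl_on_def ordf_def by auto
lemma B: "trans (ordf n f)"
  proof (rule transI)
    fix x y z assume "(x, y) \<in> ordf n f" "(y, z) \<in> ordf n f"
    then show "(x, z) \<in> ordf n f" unfolding ordf_def by auto
  qed
lemma C: "total_on {1..n} (ordf n f)" unfolding total_on_def ordf_def by auto
lemma D: assumes inj: "inj_on f {1..n}" shows "antisym (ordf n f)"
proof (rule antisymI)
  fix x y assume "(x, y) \<in> ordf n f" "(y, x) \<in> ordf n f"
  then have "x \<in> {1..n}" "y \<in> {1..n}" "f x = f y" unfolding ordf_def by auto
  then show "x = y" using inj by (rule inj_onD[rotated 1, rotated 1, OF _ _ inj] | metis inj_onD)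
qed
lemma ordf_lin: assumes inj: "inj_on f {1..n}" shows "linear_order_on {1..n} (ordf n f)"
  unfolding linear_order_on_def partial_order_on_def preorder_on_def
  using A B C D[OF inj] by (auto simp: ordf_def)

lemma ordf_pref: assumes inj: "inj_on f {1..n}"
  shows "pref (ordf n f) y x \<longleftrightarrow> y \<in> {1..n} \<and> x \<in> {1..n} \<and> f y < f x"
proof
  assume "pref (ordf n f) y x"
  then have *: "y \<noteq> x" "y \<in> {1..n}" "x \<in> {1..n}" "f y \<le> f x"
    unfolding pref_def ordf_def by auto
  have "f y \<noteq> f x" using inj_onD[OF inj _ *(2,3)] *(1) by blast
  with * show "y \<in> {1..n} \<and> x \<in> {1..n} \<and> f y < f x" by simp
next
  assume "y \<in> {1..n} \<and> x \<in> {1..n} \<and> f y < f x"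
  then show "pref (ordf n f) y x" unfolding pref_def ordf_def by auto
qed

lemma ordf_rank: assumes bij: "bij_betw f {1..n} {1..n}" and x: "x \<in> {1..n}"
  shows "rank n (ordf n f) x = f x"
proof -
  have inj: "inj_on f {1..n}" using bij by (rule bij_betw_imp_inj_on)
  have img: "f ` {1..n} = {1..n}" using bij by (rule bij_betw_imp_surj_on)
  have fx: "f x \<in> {1..n}" using x img by blast
  have e1: "{y \<in> {1..n}. pref (ordf n f) y x} = {y \<in> {1..n}. f y < f x}"
    using ordf_pref[OF inj, of _ x] x by blast
  have e2: "f ` {y \<in> {1..n}. f y < f x} = {1..<f x}"
  proof
    show "f ` {y \<in> {1..n}. f y < f x} \<subseteq> {1..<f x}"
    proof
      fix k assume "k \<in> f ` {y \<in> {1..n}. f y < f x}"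
      then obtain y where "y \<in> {1..n}" "f y < f x" "k = f y" by blast
      moreover have "f y \<in> {1..n}" using \<open>y \<in> {1..n}\<close> img by blast
      ultimately show "k \<in> {1..<f x}" by simp
    qed
    show "{1..<f x} \<subseteq> f ` {y \<in> {1..n}. f y < f x}"
    proof
      fix k assume k: "k \<in> {1..<f x}"
      then have "k \<in> {1..n}" using fx by simp
      then have "k \<in> f ` {1..n}" using img by simp
      then obtain y where "y \<in> {1..n}" "k = f y" by blast
      then show "k \<in> f ` {y \<in> {1..n}. f y < f x}" using k by auto
    qed
  qed
  have inj2: "inj_on f {y \<in> {1..n}. f y < f x}" using inj by (rule inj_on_subset) blast
  have "card {y \<in> {1..n}. pref (ordf n f) y x} = card (f ` {y \<in> {1..n}. f y < f x})"
    unfolding e1 using card_image[OF inj2] by simp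
  also have "\<dots> = f x - 1" unfolding e2 by simp
  finally have c: "card {y \<in> {1..n}. pref (ordf n f) y x} = f x - 1" .
  have "f x \<ge> 1" using fx by simp
  then show ?thesis unfolding rank_def c by simp
qed

definition f2 :: "nat \<Rightarrow> nat" where
  "f2 x = (if x = 1 then 3 else if x = 2 then 1 else if x = 3 then 2 else x)"

lemma f2_bij: assumes "n \<ge> 3" shows "bij_betw f2 {1..n} {1..n}"
proof -
  have "inj_on f2 {1..n}" unfolding inj_on_def f2_def by auto
  moreover have "f2 ` {1..n} = {1..n}"
  proof
    show "f2 ` {1..n} \<subseteq> {1..n}" using assms by (auto simp: f2_def)
    show "{1..n} \<subseteq> f2 ` {1..n}"
    proof
      fix k assume k: "k \<in> {1..n}"
      have "k = f2 (if k = 1 then 2 else if k = 2 then 3 else if k = 3 then 1 else k)"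
        by (auto simp: f2_def)
      moreover have "(if k = 1 then 2 else if k = 2 then 3 else if k = 3 then 1 else k) \<in> {1..n}"
        using k assms by auto
      ultimately show "k \<in> f2 ` {1..n}" by blast
    qed
  qed
  ultimately show ?thesis by (simp add: bij_betw_def)
qed

lemma psum: "(\<Sum>i = 1..h. if odd i then (A::nat) else B) = (h+1) div 2 * A + h div 2 * B"
proof (induction h)
  case 0 then show ?case by simp
next
  case (Suc h)
  show ?case
  proof (cases "odd h")
    case True
    then obtain k where "h = 2*k+1" by (meson oddE)
    then show ?thesis using Suc by (simp add: sum.cl_ivl_Suc algebra_simps)
  next
    case False
    then obtain k where "h = 2*k" by blast
    then show ?thesis using Suc by (simp add: sum.cl_ivl_Suc algebra_simps)
  qed
qed

lemma card_sum: "card {i \<in> {1..h::nat}. R i} = (\<Sum>i = 1..h. if R i then 1 else 0)"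
proof -
  have "(\<Sum>i = 1..h. if R i then 1 else 0) = (\<Sum>i \<in> {1..h} \<inter> {i. R i}. 1::nat)"
    by (rule sum.If_cases[where g="\<lambda>_. 0", simplified]) simp
  also have "\<dots> = card ({1..h} \<inter> {i. R i})" by simp
  also have "{1..h} \<inter> {i. R i} = {i\<in>{1..h}. R i}" by auto
  finally show ?thesis by simp
qed

lemma pcount: "card {i \<in> {1..h}. if odd i then P else Q} =
   (h+1) div 2 * (if P then 1 else 0) + h div 2 * (if Q then 1 else 0)"
proof -
  have "card {i \<in> {1..h}. if odd i then P else Q} =
    (\<Sum>i = 1..h. if odd i then (if P then 1 else 0) else (if Q then 1 else 0))"
    unfolding card_sum by (rule sum.cong) auto
  then show ?thesis using psum by simp
qed

definition cprof :: "nat \<Rightarrow> nat \<Rightarrow> nat rel" where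
  "cprof n i = (if odd i then ordf n id else ordf n f2)"

lemma cprof_profile: "n \<ge> 3 \<Longrightarrow> is_profile n h (cprof n)"
  unfolding is_profile_def cprof_def
  using ordf_lin[of id n] ordf_lin[of f2 n] f2_bij[of n] by (auto simp: bij_betw_def)

lemma cprof_cnt:
  assumes n: "n \<ge> 3" and xy: "x \<in> {1..n}" "y \<in> {1..n}"
  shows "card {i \<in> {1..h}. pref (cprof n i) y x} =
    (h+1) div 2 * (if y < x then 1 else 0) + h div 2 * (if f2 y < f2 x then 1 else 0)"
proof -
  have i2: "inj_on f2 {1..n}" using f2_bij[OF n] bij_betw_def by blast
  have "{i \<in> {1..h}. pref (cprof n i) y x} = {i \<in> {1..h}. if odd i then y < x else f2 y < f2 x}"
    unfolding cprof_def using ordf_pref[OF i2] ordf_pref[of id n] xy by auto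
  then show ?thesis using pcount by simp
qed

lemma cprof_borda:
  assumes n: "n \<ge> 3" and x: "x \<in> {1..n}"
  shows "borda_score n h (cprof n) x = (h+1) div 2 * (n - x) + h div 2 * (n - f2 x)"
proof -
  have "borda_score n h (cprof n) x = (\<Sum>i = 1..h. if odd i then n - x else n - f2 x)"
    unfolding borda_score_def cprof_def
    using ordf_rank[OF f2_bij[OF n] x] ordf_rank[OF bij_betw_id x] by (intro sum.cong) auto
  then show ?thesis using psum by simp
qed

lemma cprof_ms_ge:
  assumes n: "n \<ge> 3" and xy: "x \<in> {1..n}" "y \<in> {1..n}" "y \<noteq> x"
  shows "card {i \<in> {1..h}. pref (cprof n i) y x} \<le> minimax_score n h (cprof n) x"
  unfolding minimax_score_def
  by (rule Max_ge) (use xy in \<open>auto intro: finite_image_set\<close>)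

lemma cprof_ms1:
  assumes n: "n \<ge> 3"
  shows "minimax_score n h (cprof n) 1 \<le> h div 2"
  unfolding minimax_score_def
proof (rule Max.boundedI)
  show "finite {card {i \<in> {1..h}. pref (cprof n i) y 1} |y. y \<in> {1..n} \<and> y \<noteq> 1}"
    by (auto intro: finite_image_set)
  show "{card {i \<in> {1..h}. pref (cprof n i) y 1} |y. y \<in> {1..n} \<and> y \<noteq> 1} \<noteq> {}"
    using n by auto
  fix a assume "a \<in> {card {i \<in> {1..h}. pref (cprof n i) y 1} |y. y \<in> {1..n} \<and> y \<noteq> 1}"
  then obtain y where y: "y \<in> {1..n}" "y \<noteq> 1" and a: "a = card {i \<in> {1..h}. pref (cprof n i) y 1}"
    by auto
  have N1: "(1::nat) \<in> {1..n}" using n by auto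
  show "a \<le> h div 2" unfolding a cprof_cnt[OF n N1 y(1)] using n y by auto
qed

lemma cprof_ms_other:
  assumes n: "n \<ge> 3" and z: "z \<in> {1..n}" "z \<noteq> 1"
  shows "(h+1) div 2 \<le> minimax_score n h (cprof n) z"
proof -
  define y where "y = (if z = 3 then 2 else 1::nat)"
  have y: "y \<in> {1..n}" "y \<noteq> z" using n z by (auto simp: y_def)
  have "(h+1) div 2 \<le> card {i \<in> {1..h}. pref (cprof n i) y z}"
    unfolding cprof_cnt[OF n z(1) y(1)] using z by (auto simp: y_def)
  also have "\<dots> \<le> minimax_score n h (cprof n) z" by (rule cprof_ms_ge[OF n z(1) y])
  finally show ?thesis .
qed

lemma counter:
  assumes n: "n \<ge> 3" and h: "h \<ge> 2"
  shows "Minimax n h (cprof n) \<noteq> Borda n h (cprof n)"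
proof -
  obtain m where m: "n = m + 3" using n by (metis add.commute le_Suc_ex)
  have N1: "1 \<in> {1..n}" and N2: "2 \<in> {1..n}" using n by auto
  have f21: "f2 1 = 3" and f22: "f2 2 = 1" by (auto simp: f2_def)
  show ?thesis
  proof (cases "even h")
    case True
    then obtain e where e: "h = 2*e" by blast
    have o: "(h+1) div 2 = e" "h div 2 = e" using e by auto
    have "e \<ge> 1" using h e by auto
    have 1: "1 \<in> Minimax n h (cprof n)"
      unfolding Minimax_def
    proof (intro CollectI conjI ballI)
      show "1 \<in> {1..n}" using n by auto
      fix z assume z: "z \<in> {1..n}"
      show "minimax_score n h (cprof n) 1 \<le> minimax_score n h (cprof n) z"
      proof (cases "z = 1")
        case False
        then show ?thesis using cprof_ms1[OF n, of h] cprof_ms_other[OF n z False, of h] o by simp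
      qed simp
    qed
    have b1: "borda_score n h (cprof n) 1 = e * (m + 2) + e * m"
      unfolding cprof_borda[OF n N1] unfolding o f21 m by simp
    have b2: "borda_score n h (cprof n) 2 = e * (m + 1) + e * (m + 2)"
      unfolding cprof_borda[OF n N2] unfolding o f22 m by simp
    have "borda_score n h (cprof n) 1 < borda_score n h (cprof n) 2"
      unfolding b1 b2 using \<open>e \<ge> 1\<close> by (simp add: algebra_simps)
    then have "1 \<notin> Borda n h (cprof n)"
    proof (intro notI)
      assume lt: "borda_score n h (cprof n) 1 < borda_score n h (cprof n) 2"
        and "1 \<in> Borda n h (cprof n)"
      then have "borda_score n h (cprof n) 2 \<le> borda_score n h (cprof n) 1"
        using N2 unfolding Borda_def by blast
      with lt show False by simp
    qed
    with 1 show ?thesis by blast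
  next
    case False
    then obtain e where e: "h = 2*e+1" by (meson oddE)
    have o: "(h+1) div 2 = e+1" "h div 2 = e" using e by auto
    have "e \<ge> 1" using h e by auto
    have "minimax_score n h (cprof n) 1 < minimax_score n h (cprof n) 2"
      using cprof_ms1[OF n, of h] cprof_ms_other[OF n N2, of h] o by simp
    then have 2: "2 \<notin> Minimax n h (cprof n)"
    proof (intro notI)
      assume lt: "minimax_score n h (cprof n) 1 < minimax_score n h (cprof n) 2"
        and "2 \<in> Minimax n h (cprof n)"
      then have "minimax_score n h (cprof n) 2 \<le> minimax_score n h (cprof n) 1"
        using N1 unfolding Minimax_def by blast
      with lt show False by simp
    qed
    have "2 \<in> Borda n h (cprof n)"
      unfolding Borda_def
    proof (intro CollectI conjI ballI)
      show "2 \<in> {1..n}" using n by auto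
      fix z assume z: "z \<in> {1..n}"
      have "(e+1) * (n - z) + e * (n - f2 z) \<le> (e+1) * (n - 2) + e * (n - 1)"
      proof -
        consider "z = 1" | "z = 2" | "z = 3" | "z \<ge> 4" using z by force
        then show ?thesis
        proof cases
          case 1
          then have "f2 z = 3" by (simp add: f2_def)
          then show ?thesis unfolding 1 m using \<open>e \<ge> 1\<close> by (simp add: algebra_simps)
        next
          case 2 then show ?thesis by (simp add: f2_def)
        next
          case 3
          then have "f2 z = 2" by (simp add: f2_def)
          then show ?thesis unfolding 3 m by (simp add: algebra_simps)
        next
          case 4
          then have "f2 z = z" by (simp add: f2_def)
          moreover have "n - z \<le> n - 2" "n - z \<le> n - 1" using 4 by auto
          ultimately show ?thesis by (intro add_mono mult_le_mono2) simp_all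
        qed
      qed
      then show "borda_score n h (cprof n) z \<le> borda_score n h (cprof n) 2"
        unfolding cprof_borda[OF n z] cprof_borda[OF n N2] o f22 by simp
    qed
    with 2 show ?thesis by blast
  qed
qed


theorem corollary1:
  fixes n h :: nat
  assumes "n \<ge> 2" and "h \<ge> 2"
  shows "(\<forall>p. is_profile n h p \<longrightarrow> Minimax n h p = Borda n h p) \<longleftrightarrow> n = 2"
proof
  assume A: "\<forall>p. is_profile n h p \<longrightarrow> Minimax n h p = Borda n h p"
  show "n = 2"
  proof (rule ccontr)
    assume "n \<noteq> 2"
    then have n: "n \<ge> 3" using assms by auto
    have P: "is_profile n h (cprof n)" by (rule cprof_profile[OF n])
    have I: "is_profile n h (cprof n) \<longrightarrow> Minimax n h (cprof n) = Borda n h (cprof n)"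
      using A by (rule spec)
    have E: "Minimax n h (cprof n) = Borda n h (cprof n)" using I P by (rule mp)
    show False using counter[OF n assms(2)] E by (rule notE)
  qed
next
  assume "n = 2"
  then show "\<forall>p. is_profile n h p \<longrightarrow> Minimax n h p = Borda n h p"
    using two_case[of h] by simp
qed

end
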